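(* Consider the two-player treatment model described in the context, and suppose that: (a) (strategic complementarity) $P_j^1-P_j^0>0$ almost surely for $j=1,2$; (b) $P_j^0,P_j^1$ ($j=1,2$) are identified, and the conditional CDF $H(v_1,v_2\mid x)$ and density $h(v_1,v_2\mid x)$ of $V=(V_1,V_2)$ given $X=x$ are identified (known); (c) for all $(d_1,d_2)\in\{0,1\}^2$, the instruments $Z=(Z_1,Z_2)$ are excluded from the structural functions $\mu_j^{(d_1,d_2)}$ and are independent of $(\varepsilon,U^{(d_1,d_2)})$ given $X$; and (d) for $j=1,2$, $Z_j$ contains a player-specific continuous variable such that $\pi_j^0(W_j)$ and $\pi_j^1(W_j)$ are non-degenerate and continuously distributed given $X$. Fix $x$. If $m^{(1,0)}(x,v_1,v_2)$, $m^{(0,1)}(x,v_1,v_2)$ and $h(v_1,v_2\mid x)$ are continuous in $(v_1,v_2)$, then $$m^{(1,0)}(x,p_1^0,p_2^1)=-\frac{1}{h(p_1^0,p_2^1\mid x)}\frac{\partial^2\psi^{(1,0)}(x,p_1^0,p_2^1)}{\partial p_1^0\,\partial p_2^1}\quad\text{for }(p_1^0,p_2^1)\in\operatorname{supp}[P_1^0,P_2^1\mid X=x,D=(1,0)],$$ $$m^{(0,1)}(x,p_1^1,p_2^0)=-\frac{1}{h(p_1^1,p_2^0\mid x)}\frac{\partial^2\psi^{(0,1)}(x,p_1^1,p_2^0)}{\partial p_1^1\,\partial p_2^0}\quad\text{for }(p_1^1,p_2^0)\in\operatorname{supp}[P_1^1,P_2^0\mid X=x,D=(0,1)],$$ so that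 these marginal treatment response functions are identified.
   Context: Two players $j\in\{1,2\}$ ($-j$ denotes the partner). Each has binary treatment $D_j\in\{0,1\}$; $D=(D_1,D_2)$. Potential outcomes $Y_j^{(d_j,d_{-j})}=\mu_j^{(d_j,d_{-j})}(X_j,U_j^{(d_j,d_{-j})})$ with observed covariates $X_j$, scalar unobservables $U_j^{(d_j,d_{-j})}$ and unknown functions $\mu_j^{(d_j,d_{-j})}$; observed outcome $Y_1=\sum_{d_1,d_2\in\{0,1\}}I^{(d_1,d_2)}Y_1^{(d_1,d_2)}$, where $I^{(d_1,d_2)}=\mathbf 1\{(D_1,D_2)=(d_1,d_2)\}$. Let $X=(X_1,X_2)$, $W_j=(X_j^\top,Z_j^\top)^\top$ with instruments $Z_j$, $\varepsilon=(\varepsilon_1,\varepsilon_2)$ continuously distributed, and $U^{(d_1,d_2)}=(U_1^{(d_1,d_2)},U_2^{(d_2,d_1)})$. Treatment decisions satisfy $D_j=\mathbf 1\{\pi_j(D_{-j},W_j)\ge\varepsilon_j\}$ for unknown $\pi_j$; write $\pi_j^d(\cdot)=\pi_j(d,\cdot)$. Define $V_j=F_{\varepsilon_j}(\varepsilon_j\mid X)$, $P_j^0=F_{\varepsilon_j}(\pi_j^0(W_j)\mid X)$, $P_j^1=F_{\varepsilon_j}(\pi_j^1(W_j)\mid X)$, with $F_{\varepsilon_j}(\cdot\mid X)$ the conditional CDF of $\varepsilon_j$ given $X$ (so $V_j\sim$ Uniform$[0,1]$ given $X$). Then $D_j=\mathbf 1\{P_j^0+D_{-j}(P_j^1-P_j^0)\ge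 V_j\}$, i.e. the realized $D$ is a pure-strategy Nash equilibrium of the complete-information game with payoffs $u_j(d_j,d_{-j})=d_j(P_j^0+d_{-j}(P_j^1-P_j^0)-V_j)$. Under complementarity this gives: $D=(1,0)\iff V_1\le P_1^0,\ V_2>P_2^1$; $D=(0,1)\iff V_1>P_1^1,\ V_2\le P_2^0$; $D=(1,1)\Rightarrow V_1\le P_1^1,\ V_2\le P_2^1$; $D=(0,0)\Rightarrow V_1>P_1^0,\ V_2>P_2^0$. Marginal treatment response (MTR) function: $m^{(d_1,d_2)}(x,p_1,p_2)=E[Y_1^{(d_1,d_2)}\mid X=x,V_1=p_1,V_2=p_2]$. Also $\psi^{(1,0)}(x,p_1^0,p_2^1)=E[I^{(1,0)}Y_1\mid X=x,P_1^0=p_1^0,P_2^1=p_2^1]$ and $\psi^{(0,1)}(x,p_1^1,p_2^0)=E[I^{(0,1)}Y_1\mid X=x,P_1^1=p_1^1,P_2^0=p_2^0]$, which are identified from the data. *)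

theory Defs
  imports "HOL-Probability.Probability"
begin

text \<open>Everything is formulated conditionally on \<open>X = x\<close> for the fixed value \<open>x\<close>:
  the probability space \<open>M\<close> is the conditional law given \<open>X = x\<close>.\<close>

definition cond_exp_version ::
  "'a measure \<Rightarrow> ('a \<Rightarrow> real \<times> real) \<Rightarrow> ('a \<Rightarrow> real) \<Rightarrow> (real \<times> real \<Rightarrow> real) \<Rightarrow> bool" where
  "cond_exp_version M Q f g \<longleftrightarrow>
     g \<in> borel_measurable borel \<and> integrable M (\<lambda>\<omega>. g (Q \<omega>)) \<and>
     (\<forall>A \<in> sets borel. (\<integral>\<omega>. f \<omega> * indicator A (Q \<omega>) \<partial>M) = (\<integral>\<omega>. g (Q \<omega>) * indicator A (Q \<omega>) \<partial>M))"

definition supp_on ::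
  "'a measure \<Rightarrow> ('a \<Rightarrow> real \<times> real) \<Rightarrow> ('a \<Rightarrow> bool) \<Rightarrow> (real \<times> real) set" where
  "supp_on M Q E = {p. \<forall>e>0. measure M {\<omega> \<in> space M. Q \<omega> \<in> ball p e \<and> E \<omega>} > 0}"

definition has_mixed_partial :: "(real \<times> real \<Rightarrow> real) \<Rightarrow> real \<times> real \<Rightarrow> real \<Rightarrow> bool" where
  "has_mixed_partial f p c \<longleftrightarrow>
     (\<exists>g. (\<forall>\<^sub>F a in nhds (fst p). ((\<lambda>b. f (a, b)) has_real_derivative g a) (at (snd p)))
        \<and> (g has_real_derivative c) (at (fst p)))"

end

theory Submission
  imports Defs
begin


lemma indep_distr_prod:
  fixes M :: "'a measure" and Q :: "'a \<Rightarrow> 'b::{second_countable_topology}" and W :: "'a \<Rightarrow> 'c::{second_countable_topology}"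
  assumes P: "prob_space M"
    and [measurable]: "Q \<in> borel_measurable M" "W \<in> borel_measurable M"
    and indep: "\<And>A B. A \<in> sets borel \<Longrightarrow> B \<in> sets borel \<Longrightarrow>
      measure M {\<omega> \<in> space M. Q \<omega> \<in> A \<and> W \<omega> \<in> B}
      = measure M {\<omega> \<in> space M. Q \<omega> \<in> A} * measure M {\<omega> \<in> space M. W \<omega> \<in> B}"
  shows "distr M borel Q \<Otimes>\<^sub>M distr M borel W = distr M (borel \<Otimes>\<^sub>M borel) (\<lambda>\<omega>. (Q \<omega>, W \<omega>))"
proof (rule pair_measure_eqI)
  interpret prob_space M by fact
  show "sigma_finite_measure (distr M borel Q)"
    by (simp add: prob_space_distr prob_space_imp_sigma_finite)
  show "sigma_finite_measure (distr M borel W)"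
    by (simp add: prob_space_distr prob_space_imp_sigma_finite)
  show "sets (distr M borel Q \<Otimes>\<^sub>M distr M borel W) = sets (distr M (borel \<Otimes>\<^sub>M borel) (\<lambda>\<omega>. (Q \<omega>, W \<omega>)))"
    by simp
  fix A B assume A: "A \<in> sets (distr M borel Q)" and B: "B \<in> sets (distr M borel W)"
  then have A': "A \<in> sets borel" and B': "B \<in> sets borel" by auto
  have e: "(\<lambda>\<omega>. (Q \<omega>, W \<omega>)) -` (A \<times> B) \<inter> space M = {\<omega> \<in> space M. Q \<omega> \<in> A \<and> W \<omega> \<in> B}" by auto
  have "emeasure (distr M (borel \<Otimes>\<^sub>M borel) (\<lambda>\<omega>. (Q \<omega>, W \<omega>))) (A \<times> B)
      = emeasure M {\<omega> \<in> space M. Q \<omega> \<in> A \<and> W \<omega> \<in> B}"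
    using A' B' by (subst emeasure_distr) (auto simp: e)
  also have "\<dots> = ennreal (measure M {\<omega> \<in> space M. Q \<omega> \<in> A} * measure M {\<omega> \<in> space M. W \<omega> \<in> B})"
    using A' B' by (simp add: emeasure_eq_measure indep)
  also have "\<dots> = emeasure (distr M borel Q) A * emeasure (distr M borel W) B"
    using A' B' by (simp add: emeasure_distr emeasure_eq_measure ennreal_mult vimage_def Int_def conj_commute)
  finally show "emeasure (distr M borel Q) A * emeasure (distr M borel W) B =
         emeasure (distr M (borel \<Otimes>\<^sub>M borel) (\<lambda>\<omega>. (Q \<omega>, W \<omega>))) (A \<times> B)" by simp
qed



lemma identA:
  fixes M :: "'a measure" and Q V :: "'a \<Rightarrow> real \<times> real" and Y f :: "'a \<Rightarrow> real"
    and R :: "real \<times> real \<Rightarrow> (real \<times> real) set" and G :: "real \<times> real \<Rightarrow> real"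
  assumes P: "prob_space M"
    and [measurable]: "Q \<in> borel_measurable M" "V \<in> borel_measurable M" "Y \<in> borel_measurable M"
       "f \<in> borel_measurable M"
    and intY: "integrable M Y"
    and indep: "\<And>A B. A \<in> sets borel \<Longrightarrow> B \<in> sets borel \<Longrightarrow>
      measure M {\<omega> \<in> space M. Q \<omega> \<in> A \<and> (V \<omega>, Y \<omega>) \<in> B}
      = measure M {\<omega> \<in> space M. Q \<omega> \<in> A} * measure M {\<omega> \<in> space M. (V \<omega>, Y \<omega>) \<in> B}"
    and Rmeas[measurable]: "(\<lambda>p. indicator (R (fst p)) (snd p) :: real) \<in> borel_measurable borel"
    and fAE: "AE \<omega> in M. f \<omega> = indicator (R (Q \<omega>)) (V \<omega>) * Y \<omega>"
    and G_def: "G = (\<lambda>q. \<integral>\<omega>. Y \<omega> * indicator (R q) (V \<omega>) \<partial>M)"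
  shows "integrable M (\<lambda>\<omega>. G (Q \<omega>))"
    "\<And>A. A \<in> sets borel \<Longrightarrow> (\<integral>\<omega>. f \<omega> * indicator A (Q \<omega>) \<partial>M) = (\<integral>\<omega>. G (Q \<omega>) * indicator A (Q \<omega>) \<partial>M)"
proof -
  interpret prob_space M by fact
  define W where "W = (\<lambda>\<omega>. (V \<omega>, Y \<omega>))"
  have [measurable]: "W \<in> borel_measurable M" unfolding W_def by measurable
  let ?MQ = "distr M borel Q" and ?MW = "distr M borel W"
  have prod: "?MQ \<Otimes>\<^sub>M ?MW = distr M (borel \<Otimes>\<^sub>M borel) (\<lambda>\<omega>. (Q \<omega>, W \<omega>))"
    by (rule indep_distr_prod[OF P]) (auto simp: W_def intro: indep)
  interpret MQ: prob_space ?MQ by (simp add: prob_space_distr)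
  interpret MW: prob_space ?MW by (simp add: prob_space_distr)
  interpret PS: pair_sigma_finite ?MQ ?MW ..
  define F where "F = (\<lambda>(A::(real\<times>real) set) (p::(real\<times>real)\<times>((real\<times>real)\<times>real)).
      indicator (R (fst p)) (fst (snd p)) * snd (snd p) * indicator A (fst p) :: real)"
  have Rm2: "(\<lambda>p::(real\<times>real)\<times>((real\<times>real)\<times>real). indicator (R (fst p)) (fst (snd p)) :: real) \<in> borel_measurable borel"
  proof -
    have "(\<lambda>p::(real\<times>real)\<times>((real\<times>real)\<times>real). (fst p, fst (snd p))) \<in> borel_measurable borel"
      by (intro borel_measurable_continuous_onI continuous_intros)
    from measurable_compose[OF this Rmeas] show ?thesis by simp
  qed
  have Fm: "F A \<in> borel_measurable (borel \<Otimes>\<^sub>M borel)" if "A \<in> sets borel" for A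
  proof -
    have m1: "(\<lambda>p::(real\<times>real)\<times>((real\<times>real)\<times>real). snd (snd p)) \<in> borel_measurable borel"
      by (intro borel_measurable_continuous_onI continuous_intros)
    have "(\<lambda>p::(real\<times>real)\<times>((real\<times>real)\<times>real). fst p) \<in> borel_measurable borel"
      by (intro borel_measurable_continuous_onI continuous_intros)
    from measurable_compose[OF this borel_measurable_indicator[OF that]]
    have m2: "(\<lambda>p::(real\<times>real)\<times>((real\<times>real)\<times>real). indicator A (fst p) :: real) \<in> borel_measurable borel" .
    show ?thesis unfolding F_def borel_prod
      by (intro borel_measurable_times Rm2 m1 m2)
  qed
  have Fint: "integrable (?MQ \<Otimes>\<^sub>M ?MW) (F A)" if A: "A \<in> sets borel" for A
  proof -
    have "integrable M (\<lambda>\<omega>. F A (Q \<omega>, W \<omega>))"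
    proof (rule Bochner_Integration.integrable_bound[OF intY])
      show "(\<lambda>\<omega>. F A (Q \<omega>, W \<omega>)) \<in> borel_measurable M"
        using measurable_compose[OF _ Fm[OF A], of "\<lambda>\<omega>. (Q \<omega>, W \<omega>)"] by simp
      show "AE x in M. norm (F A (Q x, W x)) \<le> norm (Y x)"
        by (auto simp: F_def W_def indicator_def)
    qed
    then show ?thesis unfolding prod
      by (subst integrable_distr_eq) (auto intro: Fm[OF A])
  qed
  have inner: "(\<integral>w. F A (q, w) \<partial>?MW) = G q * indicator A q" if A: "A \<in> sets borel" for A q
  proof -
    have "(\<integral>w. F A (q, w) \<partial>?MW) = (\<integral>\<omega>. F A (q, W \<omega>) \<partial>M)"
      by (rule integral_distr) (use Fm[OF A] in auto)
    also have "\<dots> = (\<integral>\<omega>. Y \<omega> * indicator (R q) (V \<omega>) * indicator A q \<partial>M)"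
      by (auto simp: F_def W_def mult_ac intro!: Bochner_Integration.integral_cong)
    also have "\<dots> = G q * indicator A q" by (simp add: G_def)
    finally show ?thesis .
  qed
  have Gm[measurable]: "G \<in> borel_measurable borel"
  proof -
    have "(\<lambda>q. \<integral>w. F UNIV (q, w) \<partial>?MW) \<in> borel_measurable ?MQ"
      using Fm[of UNIV] by (intro MW.borel_measurable_lebesgue_integral) simp
    then show ?thesis using inner[of UNIV] by simp
  qed
  have "integrable ?MQ (\<lambda>q. \<integral>w. F UNIV (q, w) \<partial>?MW)"
    by (rule PS.integrable_fst'[OF Fint]) simp
  then have "integrable ?MQ G" using inner[of UNIV] by simp
  then show "integrable M (\<lambda>\<omega>. G (Q \<omega>))"
    by (subst (asm) integrable_distr_eq) auto
  fix A :: "(real\<times>real) set" assume A[measurable]: "A \<in> sets borel"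
  have "(\<integral>\<omega>. f \<omega> * indicator A (Q \<omega>) \<partial>M) = (\<integral>\<omega>. F A (Q \<omega>, W \<omega>) \<partial>M)"
    using fAE
    apply (intro integral_cong_AE)
      apply simp
    using measurable_compose[OF _ Fm[OF A], of "\<lambda>\<omega>. (Q \<omega>, W \<omega>)"] apply simp
    by (auto simp: F_def W_def)
  also have "\<dots> = integral\<^sup>L (distr M (borel \<Otimes>\<^sub>M borel) (\<lambda>\<omega>. (Q \<omega>, W \<omega>))) (F A)"
    by (rule integral_distr[symmetric]) (use Fm[OF A] in auto)
  also have "\<dots> = (\<integral>q. (\<integral>w. F A (q, w) \<partial>?MW) \<partial>?MQ)"
    unfolding prod[symmetric] by (rule PS.integral_fst'[OF Fint[OF A], symmetric])
  also have "\<dots> = (\<integral>q. G q * indicator A q \<partial>?MQ)" using inner[OF A] by simp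
  also have "\<dots> = (\<integral>\<omega>. G (Q \<omega>) * indicator A (Q \<omega>) \<partial>M)"
    by (rule integral_distr) auto
  finally show "(\<integral>\<omega>. f \<omega> * indicator A (Q \<omega>) \<partial>M) = (\<integral>\<omega>. G (Q \<omega>) * indicator A (Q \<omega>) \<partial>M)" .
qed



lemma identB:
  fixes M :: "'a measure" and Q :: "'a \<Rightarrow> real \<times> real" and psi G :: "real \<times> real \<Rightarrow> real"
  assumes P: "prob_space M"
    and Qm[measurable]: "Q \<in> borel_measurable M"
    and ipsi: "integrable M (\<lambda>\<omega>. psi (Q \<omega>))" and iG: "integrable M (\<lambda>\<omega>. G (Q \<omega>))"
    and eq: "\<And>A. A \<in> sets borel \<Longrightarrow> (\<integral>\<omega>. psi (Q \<omega>) * indicator A (Q \<omega>) \<partial>M) = (\<integral>\<omega>. G (Q \<omega>) * indicator A (Q \<omega>) \<partial>M)"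
    and p: "p \<in> supp_on M Q (\<lambda>_. True)"
    and c1: "isCont psi p" and c2: "isCont G p"
  shows "psi p = G p"
proof (rule ccontr)
  interpret prob_space M by fact
  assume ne: "psi p \<noteq> G p"
  define c :: real where "c = (if psi p > G p then 1 else -1)"
  define g where "g = (\<lambda>q. c * (psi q - G q))"
  have gp: "g p > 0" using ne by (auto simp: g_def c_def)
  have "isCont g p" unfolding g_def using c1 c2 by (intro continuous_intros)
  then have "(g \<longlongrightarrow> g p) (at p)" by (simp add: isCont_def)
  from order_tendstoD(1)[OF this, of "g p / 2"] gp
  have "eventually (\<lambda>q. g p / 2 < g q) (at p)" by simp
  then obtain r where r: "r > 0" "\<And>q. q \<noteq> p \<Longrightarrow> dist q p < r \<Longrightarrow> g p / 2 < g q"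
    unfolding eventually_at by blast
  have rb: "g p / 2 \<le> g q" if "q \<in> ball p r" for q
    using r(2)[of q] that gp by (cases "q = p") (auto simp: dist_commute)
  let ?A = "ball p r"
  have Am: "?A \<in> sets borel" by simp
  have psim: "(\<lambda>\<omega>. psi (Q \<omega>)) \<in> borel_measurable M" using ipsi by (rule borel_measurable_integrable)
  have Gm: "(\<lambda>\<omega>. G (Q \<omega>)) \<in> borel_measurable M" using iG by (rule borel_measurable_integrable)
  have im: "(\<lambda>\<omega>. indicator ?A (Q \<omega>) :: real) \<in> borel_measurable M" by (rule measurable_compose[OF Qm borel_measurable_indicator[OF Am]])
  have i1: "integrable M (\<lambda>\<omega>. psi (Q \<omega>) * indicator ?A (Q \<omega>))"
    by (rule Bochner_Integration.integrable_bound[OF ipsi]) (auto intro!: borel_measurable_times psim im simp: indicator_def)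
  have i2: "integrable M (\<lambda>\<omega>. G (Q \<omega>) * indicator ?A (Q \<omega>))"
    by (rule Bochner_Integration.integrable_bound[OF iG]) (auto intro!: borel_measurable_times Gm im simp: indicator_def)
  have i3: "integrable M (\<lambda>\<omega>. g (Q \<omega>) * indicator ?A (Q \<omega>))"
  proof -
    have "integrable M (\<lambda>\<omega>. c * (psi (Q \<omega>) * indicator ?A (Q \<omega>)) - c * (G (Q \<omega>) * indicator ?A (Q \<omega>)))"
      using i1 i2 by (intro Bochner_Integration.integrable_diff integrable_mult_right)
    then show ?thesis by (simp add: g_def algebra_simps)
  qed
  have zero: "(\<integral>\<omega>. g (Q \<omega>) * indicator ?A (Q \<omega>) \<partial>M) = 0"
  proof -
    have "(\<integral>\<omega>. g (Q \<omega>) * indicator ?A (Q \<omega>) \<partial>M)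
       = (\<integral>\<omega>. c * (psi (Q \<omega>) * indicator ?A (Q \<omega>)) - c * (G (Q \<omega>) * indicator ?A (Q \<omega>)) \<partial>M)"
      by (simp add: g_def algebra_simps)
    also have "\<dots> = c * (\<integral>\<omega>. psi (Q \<omega>) * indicator ?A (Q \<omega>) \<partial>M) - c * (\<integral>\<omega>. G (Q \<omega>) * indicator ?A (Q \<omega>) \<partial>M)"
      using i1 i2 by simp
    also have "\<dots> = 0" using eq[OF Am] by simp
    finally show ?thesis .
  qed
  have pos: "measure M {\<omega> \<in> space M. Q \<omega> \<in> ?A \<and> True} > 0" using p r(1) by (auto simp: supp_on_def)
  have "(\<integral>\<omega>. g p / 2 * indicator ?A (Q \<omega>) \<partial>M) \<le> (\<integral>\<omega>. g (Q \<omega>) * indicator ?A (Q \<omega>) \<partial>M)"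
  proof (rule integral_mono[OF _ i3])
    show "integrable M (\<lambda>\<omega>. g p / 2 * indicator ?A (Q \<omega>))"
      by (rule Bochner_Integration.integrable_bound[of _ "\<lambda>_. g p / 2"]) (auto intro!: borel_measurable_times im simp: indicator_def)
    show "g p / 2 * indicator ?A (Q x) \<le> g (Q x) * indicator ?A (Q x)" for x
      using rb[of "Q x"] by (auto simp: indicator_def)
  qed
  moreover have "(\<integral>\<omega>. g p / 2 * indicator ?A (Q \<omega>) \<partial>M) = g p / 2 * measure M {\<omega> \<in> space M. Q \<omega> \<in> ?A \<and> True}"
  proof -
    have "(\<integral>\<omega>. indicator ?A (Q \<omega>) \<partial>M) = measure M {\<omega> \<in> space M. Q \<omega> \<in> ?A \<and> True}"
    proof -
      have "(\<integral>\<omega>. indicator ?A (Q \<omega>) \<partial>M) = (\<integral>\<omega>. indicator (Q -` ?A \<inter> space M) \<omega> \<partial>M)"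
        by (rule Bochner_Integration.integral_cong) (auto simp: indicator_def)
      also have "\<dots> = measure M ((Q -` ?A \<inter> space M) \<inter> space M)"
        by (rule Bochner_Integration.integral_indicator)
      also have "\<dots> = measure M {\<omega> \<in> space M. Q \<omega> \<in> ?A \<and> True}"
        by (rule arg_cong[where f="measure M"]) auto
      finally show ?thesis .
    qed
    then show ?thesis by (simp only: integral_mult_right_zero)
  qed
  ultimately have "g p / 2 * measure M {\<omega> \<in> space M. Q \<omega> \<in> ?A \<and> True} \<le> 0" using zero by linarith
  moreover have "g p / 2 * measure M {\<omega> \<in> space M. Q \<omega> \<in> ?A \<and> True} > 0"
    using gp pos by (intro mult_pos_pos) auto
  ultimately show False by linarith
qed



lemma lip_int:
  fixes f :: "real \<Rightarrow> real"
  assumes c: "continuous_on {0..1} f" and B: "\<And>y. y \<in> {0..1} \<Longrightarrow> \<bar>f y\<bar> \<le> B"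
    and u: "u \<in> {0..1}" and w: "w \<in> {0..1}"
  shows "\<bar>integral {0..u} f - integral {0..w} f\<bar> \<le> B * \<bar>u - w\<bar>"
proof -
  have gen: "\<bar>integral {0..u} f - integral {0..w} f\<bar> \<le> B * \<bar>u - w\<bar>"
    if u: "u \<in> {0..1}" and w: "w \<in> {0..1}" and uw: "u \<le> w" for u w
  proof -
    have "f integrable_on {0..w}"
      by (rule integrable_continuous_real) (rule continuous_on_subset[OF c], use w in auto)
    then have "integral {0..u} f + integral {u..w} f = integral {0..w} f"
      using u uw by (intro Henstock_Kurzweil_Integration.integral_combine) auto
    moreover have "norm (integral {u..w} f) \<le> B * (w - u)"
      using uw u w by (intro integral_bound continuous_on_subset[OF c]) (auto intro: B)
    ultimately show ?thesis using uw by (simp add: abs_minus_commute)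
  qed
  show ?thesis
  proof (cases "u \<le> w")
    case True then show ?thesis using gen[OF u w] by simp
  next
    case False then show ?thesis using gen[OF w u] by (simp add: abs_minus_commute)
  qed
qed

context
  fixes k :: "real \<times> real \<Rightarrow> real"
  assumes kc: "continuous_on ({0..1} \<times> {0..1}) k"
begin

definition Phi :: "real \<Rightarrow> real \<Rightarrow> real" where
  "Phi a y = integral {0..a} (\<lambda>x. k (x, y))"

definition Hi :: "real \<Rightarrow> real \<Rightarrow> real" where
  "Hi a b = integral {0..b} (Phi a)"

lemma k_sec1: "y \<in> {0..1} \<Longrightarrow> continuous_on {0..1} (\<lambda>x. k (x, y))"
  by (rule continuous_on_compose2[OF kc]) (auto intro!: continuous_intros)

lemma Phi_cont: assumes a: "a \<in> {0..1}" shows "continuous_on {0..1} (Phi a)"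
proof -
  have "continuous_on ({0..1} \<times> cbox 0 a) (\<lambda>z. k (snd z, fst z))"
    by (rule continuous_on_compose2[OF kc]) (use a in \<open>auto intro!: continuous_intros\<close>)
  then have "continuous_on ({0..1} \<times> cbox 0 a) (\<lambda>(y, x). k (x, y))"
    by (simp add: case_prod_beta)
  from integral_continuous_on_param[OF this] show ?thesis by (simp add: Phi_def fun_eq_iff)
qed

lemma k_bound: obtains B where "B \<ge> 0" "\<And>v. v \<in> {0..1} \<times> {0..1} \<Longrightarrow> \<bar>k v\<bar> \<le> B"
proof -
  have "compact (k ` ({0..1} \<times> {0..1}))"
    by (intro compact_continuous_image kc compact_Times) auto
  then have "bounded (k ` ({0..1} \<times> {0..1}))" by (rule compact_imp_bounded)
  then obtain B where "\<forall>x\<in>k ` ({0..1} \<times> {0..1}). norm x \<le> B" unfolding bounded_iff by blast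
  then have "\<And>v. v \<in> {0..1} \<times> {0..1} \<Longrightarrow> norm (k v) \<le> B" by blast
  then show ?thesis using that[of "max B 0"] by force
qed

lemma Hi_deriv_b:
  assumes a: "a \<in> {0..1}" and b: "b \<in> {0<..<1}"
  shows "((\<lambda>b. Hi a b) has_real_derivative Phi a b) (at b)"
proof -
  have "((\<lambda>x. integral {0..x} (Phi a)) has_real_derivative Phi a b) (at b within {0..1})"
    using b by (intro integral_has_real_derivative Phi_cont a) auto
  moreover have "at b within {0..1} = at b" by (rule at_within_interior) (use b in simp)
  ultimately show ?thesis unfolding Hi_def by simp
qed

lemma Phi_deriv_a:
  assumes b: "b \<in> {0..1}" and a: "a \<in> {0<..<1}"
  shows "((\<lambda>a. Phi a b) has_real_derivative k (a, b)) (at a)"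
proof -
  have "((\<lambda>x. integral {0..x} (\<lambda>x. k (x, b))) has_real_derivative k (a, b)) (at a within {0..1})"
    using a by (intro integral_has_real_derivative k_sec1 b) auto
  moreover have "at a within {0..1} = at a" by (rule at_within_interior) (use a in simp)
  ultimately show ?thesis unfolding Phi_def by simp
qed

lemma Hi_cont: "continuous_on ({0..1} \<times> {0..1}) (\<lambda>q. Hi (fst q) (snd q))"
proof -
  obtain B where B0: "B \<ge> 0" and B: "\<And>v. v \<in> {0..1} \<times> {0..1} \<Longrightarrow> \<bar>k v\<bar> \<le> B" using k_bound by blast
  have Phib: "\<bar>Phi a y\<bar> \<le> B" if "a \<in> {0..1}" "y \<in> {0..1}" for a y
  proof -
    have "\<bar>Phi a y\<bar> \<le> B * a" using lip_int[OF k_sec1[OF that(2)], of B a 0] B that by (simp add: Phi_def)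
    moreover have "B * a \<le> B" using that B0 by (intro mult_left_le) auto
    ultimately show ?thesis by linarith
  qed
  have Phil: "\<bar>Phi a y - Phi a' y\<bar> \<le> B * \<bar>a - a'\<bar>" if "a \<in> {0..1}" "a' \<in> {0..1}" "y \<in> {0..1}" for a a' y
    using lip_int[OF k_sec1[OF that(3)], of B a a'] B that by (simp add: Phi_def)
  have lip: "\<bar>Hi a b - Hi a' b'\<bar> \<le> B * \<bar>b - b'\<bar> + B * \<bar>a - a'\<bar>"
    if ab: "a \<in> {0..1}" "b \<in> {0..1}" "a' \<in> {0..1}" "b' \<in> {0..1}" for a b a' b'
  proof -
    have 1: "\<bar>Hi a b - Hi a b'\<bar> \<le> B * \<bar>b - b'\<bar>"
      unfolding Hi_def using ab by (intro lip_int Phi_cont Phib) auto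
    have "integral {0..b'} (Phi a) - integral {0..b'} (Phi a') = integral {0..b'} (\<lambda>y. Phi a y - Phi a' y)"
      by (rule integral_diff[symmetric]; rule integrable_continuous_real; rule continuous_on_subset[OF Phi_cont]) (use ab in auto)
    also have "norm \<dots> \<le> (B * \<bar>a - a'\<bar>) * (b' - 0)"
      using ab by (intro integral_bound continuous_on_diff continuous_on_subset[OF Phi_cont]) (auto intro!: Phil)
    finally have 2: "\<bar>Hi a b' - Hi a' b'\<bar> \<le> B * \<bar>a - a'\<bar>"
    proof -
      have "(B * \<bar>a - a'\<bar>) * (b' - 0) \<le> B * \<bar>a - a'\<bar>"
        using ab B0 by (intro mult_left_le) auto
      with \<open>norm (integral {0..b'} (\<lambda>y. Phi a y - Phi a' y)) \<le> _\<close> show ?thesis unfolding Hi_def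
        using \<open>integral {0..b'} (Phi a) - integral {0..b'} (Phi a') = _\<close> by simp
    qed
    show ?thesis using 1 2 by linarith
  qed
  show ?thesis unfolding continuous_on_iff
  proof (intro ballI allI impI)
    fix q e assume q: "q \<in> {0..1::real} \<times> {0..1::real}" and e: "(0::real) < e"
    define d where "d = e / (2 * B + 1)"
    have d: "d > 0" using e B0 unfolding d_def by auto
    show "\<exists>d>0. \<forall>x'\<in>{0..1} \<times> {0..1}. dist x' q < d \<longrightarrow> dist (Hi (fst x') (snd x')) (Hi (fst q) (snd q)) < e"
    proof (intro exI[of _ d] conjI d ballI impI)
      fix x' assume x': "x' \<in> {0..1::real} \<times> {0..1::real}" and dx: "dist x' q < d"
      have c1: "\<bar>fst x' - fst q\<bar> \<le> dist x' q" and c2: "\<bar>snd x' - snd q\<bar> \<le> dist x' q"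
        using dist_fst_le[of x' q] dist_snd_le[of x' q] by (auto simp: dist_real_def)
      have c3: "\<bar>Hi (fst x') (snd x') - Hi (fst q) (snd q)\<bar> \<le> B * \<bar>snd x' - snd q\<bar> + B * \<bar>fst x' - fst q\<bar>"
        using lip[of "fst x'" "snd x'" "fst q" "snd q"] x' q by (auto simp: mem_Times_iff)
      have "\<bar>Hi (fst x') (snd x') - Hi (fst q) (snd q)\<bar> \<le> 2 * B * dist x' q"
        using c3 mult_left_mono[OF c1 B0] mult_left_mono[OF c2 B0] by linarith
      also have "\<dots> \<le> 2 * B * d" using dx B0 by (intro mult_left_mono) auto
      also have "\<dots> < e" using e B0 unfolding d_def by (simp add: field_simps)
      finally show "dist (Hi (fst x') (snd x')) (Hi (fst q) (snd q)) < e" by (simp add: dist_real_def)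
    qed
  qed
qed

lemma k_integrable:
  assumes S: "S \<in> sets borel" "S \<subseteq> {0..1} \<times> {0..1}"
  shows "integrable lborel (\<lambda>v. indicator S v * k v)"
proof -
  have i0: "integrable lborel (\<lambda>x. indicator ({0..1} \<times> {0..1}) x *\<^sub>R k x)"
    by (rule borel_integrable_compact) (auto intro: kc compact_Times)
  have "integrable lborel (\<lambda>x. indicator S x *\<^sub>R (indicator ({0..1} \<times> {0..1}) x *\<^sub>R k x))"
    using integrable_mult_indicator[OF _ i0, of S] S by simp
  moreover have "(\<lambda>x. indicator S x *\<^sub>R (indicator ({0..1} \<times> {0..1}) x *\<^sub>R k x)) = (\<lambda>x. indicator S x * k x)"
    using S by (auto simp: indicator_def fun_eq_iff)
  ultimately show ?thesis by simp
qed

lemma set_int_eq: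
  fixes g :: "real \<Rightarrow> real"
  assumes "continuous_on {0..c} g"
  shows "(\<integral>x. indicator {0..c} x * g x \<partial>lborel) = integral {0..c} g"
proof -
  have "integrable lborel (\<lambda>x. indicator {0..c} x *\<^sub>R g x)"
    by (rule borel_integrable_compact) (auto intro: assms)
  then have "set_integrable lborel {0..c} g" by (simp add: set_integrable_def)
  from set_borel_integral_eq_integral(2)[OF this] show ?thesis
    by (simp add: set_lebesgue_integral_def)
qed

lemma H_eq:
  assumes a: "a \<in> {0..1}" and b: "b \<in> {0..1}"
  shows "(\<integral>v. indicator ({0..a} \<times> {0..b}) v * k v \<partial>lborel) = Hi a b"
proof -
  define f where "f = (\<lambda>x y. indicator ({0..a} \<times> {0..b}) (x, y) * k (x, y))"
  have int: "integrable lborel (\<lambda>v. indicator ({0..a} \<times> {0..b}) v * k v)"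
    using a b by (intro k_integrable borel_closed closed_Times) auto
  then have int2: "integrable (lborel \<Otimes>\<^sub>M lborel) (case_prod f)"
    by (simp add: lborel_prod f_def case_prod_unfold)
  have inner: "(\<integral>x. f x y \<partial>lborel) = indicator {0..b} y * Phi a y" for y
  proof (cases "y \<in> {0..b}")
    case True
    then have y: "y \<in> {0..1}" using b by auto
    have "(\<integral>x. f x y \<partial>lborel) = (\<integral>x. indicator {0..a} x * k (x, y) \<partial>lborel)"
      using True by (intro Bochner_Integration.integral_cong) (auto simp: f_def indicator_def)
    also have "\<dots> = Phi a y" unfolding Phi_def
      by (rule set_int_eq, rule continuous_on_subset[OF k_sec1[OF y]]) (use a in auto)
    finally show ?thesis using True by simp
  next
    case False
    then have "(\<lambda>x. f x y) = (\<lambda>x. 0)" by (auto simp: f_def indicator_def fun_eq_iff)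
    then show ?thesis using False by simp
  qed
  have "(\<integral>v. indicator ({0..a} \<times> {0..b}) v * k v \<partial>lborel) = integral\<^sup>L (lborel \<Otimes>\<^sub>M lborel) (case_prod f)"
    by (simp add: lborel_prod f_def case_prod_unfold)
  also have "\<dots> = (\<integral>y. (\<integral>x. f x y \<partial>lborel) \<partial>lborel)"
    by (rule lborel_pair.integral_snd[OF int2, symmetric])
  also have "\<dots> = (\<integral>y. indicator {0..b} y * Phi a y \<partial>lborel)" by (simp add: inner)
  also have "\<dots> = Hi a b" unfolding Hi_def
    by (rule set_int_eq, rule continuous_on_subset[OF Phi_cont[OF a]]) (use b in auto)
  finally show ?thesis .
qed

end



lemma mixed_local:
  assumes g: "has_mixed_partial g p c" and e: "e > 0" and eq: "\<And>q. q \<in> ball p e \<Longrightarrow> f q = g q"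
  shows "has_mixed_partial f p c"
proof -
  obtain g' where ev: "\<forall>\<^sub>F a in nhds (fst p). ((\<lambda>b. g (a, b)) has_real_derivative g' a) (at (snd p))"
    and d: "(g' has_real_derivative c) (at (fst p))"
    using g unfolding has_mixed_partial_def by blast
  have ev2: "\<forall>\<^sub>F a in nhds (fst p). a \<in> ball (fst p) (e/2)"
    using e by (intro eventually_nhds_in_open) auto
  have "\<forall>\<^sub>F a in nhds (fst p). ((\<lambda>b. f (a, b)) has_real_derivative g' a) (at (snd p))"
    using ev ev2
  proof eventually_elim
    case (elim a)
    show ?case
    proof (rule has_field_derivative_transform_within_open[OF elim(1), of "ball (snd p) (e/2)"])
      show "open (ball (snd p) (e/2))" by simp
      show "snd p \<in> ball (snd p) (e/2)" using e by simp
      fix b assume b: "b \<in> ball (snd p) (e/2)"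
      have "dist (a, b) p < e"
      proof -
        have "dist (a, b) p \<le> dist a (fst p) + dist b (snd p)"
          using dist_Pair_Pair[of a b "fst p" "snd p"] sqrt_sum_squares_le_sum_abs[of "dist a (fst p)" "dist b (snd p)"]
          by simp
        also have "\<dots> < e" using elim(2) b by (simp add: dist_commute)
        finally show ?thesis .
      qed
      then show "g (a, b) = f (a, b)" using eq[of "(a,b)"] by (simp add: dist_commute)
    qed
  qed
  then show ?thesis unfolding has_mixed_partial_def using d by blast
qed

lemma supp_box:
  fixes M :: "'a measure" and Q :: "'a \<Rightarrow> real \<times> real"
  assumes Qr: "\<And>\<omega>. \<omega> \<in> space M \<Longrightarrow> Q \<omega> \<in> {0..1} \<times> {0..1}"
  shows "interior (supp_on M Q E) \<subseteq> {0<..<1} \<times> {0<..<1}"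
proof -
  have "supp_on M Q E \<subseteq> {0..1} \<times> {0..1}"
  proof
    fix p assume p: "p \<in> supp_on M Q E"
    show "p \<in> {0..1} \<times> {0..1}"
    proof (rule ccontr)
      assume np: "p \<notin> {0..1} \<times> {0..1}"
      have "open (- ({0..1::real} \<times> {0..1::real}))" by (intro open_Compl closed_Times) auto
      then obtain e where e: "e > 0" "ball p e \<subseteq> - ({0..1} \<times> {0..1})"
        using np open_contains_ball by blast
      then have "{\<omega> \<in> space M. Q \<omega> \<in> ball p e \<and> E \<omega>} = {}" using Qr by blast
      moreover have "measure M {\<omega> \<in> space M. Q \<omega> \<in> ball p e \<and> E \<omega>} > 0"
        using p e(1) unfolding supp_on_def mem_Collect_eq by blast
      ultimately show False by (metis measure_empty less_irrefl)
    qed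
  qed
  then have "interior (supp_on M Q E) \<subseteq> interior ({0..1} \<times> {0..1})" by (rule interior_mono)
  then show ?thesis by (simp add: interior_Times)
qed

lemma mixed_G1:
  assumes kc: "continuous_on ({0..1} \<times> {0..1}) k" and p: "p \<in> {0<..<1} \<times> {0<..<1}"
  shows "has_mixed_partial (\<lambda>q. Hi k (fst q) 1 - Hi k (fst q) (snd q)) p (- k p)"
  unfolding has_mixed_partial_def
proof (intro exI conjI)
  have "\<forall>\<^sub>F a in nhds (fst p). a \<in> {0<..<1}"
    using p by (intro eventually_nhds_in_open) auto
  then show "\<forall>\<^sub>F a in nhds (fst p). ((\<lambda>b. Hi k (fst (a, b)) 1 - Hi k (fst (a, b)) (snd (a, b)))
      has_real_derivative (\<lambda>a. 0 - Phi k a (snd p)) a) (at (snd p))"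
  proof eventually_elim
    case (elim a)
    show ?case using Hi_deriv_b[OF kc, of a "snd p"] elim p
      by (auto intro!: derivative_eq_intros simp: mem_Times_iff)
  qed
  show "((\<lambda>a. 0 - Phi k a (snd p)) has_real_derivative - k p) (at (fst p))"
    using Phi_deriv_a[OF kc, of "snd p" "fst p"] p
    by (auto intro!: derivative_eq_intros simp: mem_Times_iff)
qed

lemma mixed_G2:
  assumes kc: "continuous_on ({0..1} \<times> {0..1}) k" and p: "p \<in> {0<..<1} \<times> {0<..<1}"
  shows "has_mixed_partial (\<lambda>q. Hi k 1 (snd q) - Hi k (fst q) (snd q)) p (- k p)"
  unfolding has_mixed_partial_def
proof (intro exI conjI)
  have "\<forall>\<^sub>F a in nhds (fst p). a \<in> {0<..<1}"
    using p by (intro eventually_nhds_in_open) auto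
  then show "\<forall>\<^sub>F a in nhds (fst p). ((\<lambda>b. Hi k 1 (snd (a, b)) - Hi k (fst (a, b)) (snd (a, b)))
      has_real_derivative (\<lambda>a. Phi k 1 (snd p) - Phi k a (snd p)) a) (at (snd p))"
  proof eventually_elim
    case (elim a)
    show ?case using Hi_deriv_b[OF kc, of a "snd p"] Hi_deriv_b[OF kc, of 1 "snd p"] elim p
      by (auto intro!: derivative_eq_intros simp: mem_Times_iff)
  qed
  show "((\<lambda>a. Phi k 1 (snd p) - Phi k a (snd p)) has_real_derivative - k p) (at (fst p))"
    using Phi_deriv_a[OF kc, of "snd p" "fst p"] p
    by (auto intro!: derivative_eq_intros simp: mem_Times_iff)
qed



lemma part_generic:
  fixes M :: "'a measure" and Q V :: "'a \<Rightarrow> real \<times> real" and Y f :: "'a \<Rightarrow> real"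
    and R :: "real \<times> real \<Rightarrow> (real \<times> real) set" and psi m h Gi :: "real \<times> real \<Rightarrow> real"
  assumes P: "prob_space M"
    and Qm[measurable]: "Q \<in> borel_measurable M" and Vm[measurable]: "V \<in> borel_measurable M"
    and Ym[measurable]: "Y \<in> borel_measurable M" and fm[measurable]: "f \<in> borel_measurable M"
    and intY: "integrable M Y"
    and Qr: "\<And>\<omega>. \<omega> \<in> space M \<Longrightarrow> Q \<omega> \<in> {0..1} \<times> {0..1}"
    and indep: "\<And>A B. A \<in> sets borel \<Longrightarrow> B \<in> sets borel \<Longrightarrow>
      measure M {\<omega> \<in> space M. Q \<omega> \<in> A \<and> (V \<omega>, Y \<omega>) \<in> B}
      = measure M {\<omega> \<in> space M. Q \<omega> \<in> A} * measure M {\<omega> \<in> space M. (V \<omega>, Y \<omega>) \<in> B}"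
    and Rmeas: "(\<lambda>p. indicator (R (fst p)) (snd p) :: real) \<in> borel_measurable borel"
    and fAE: "AE \<omega> in M. f \<omega> = indicator (R (Q \<omega>)) (V \<omega>) * Y \<omega>"
    and psi: "cond_exp_version M Q f psi"
    and psic: "continuous_on (supp_on M Q (\<lambda>_. True)) psi"
    and m: "cond_exp_version M V Y m"
    and hdens: "distributed M lborel V (\<lambda>v. ennreal (h v))" and hnn: "\<And>v. 0 \<le> h v"
    and Gform: "\<And>q. q \<in> {0<..<1} \<times> {0<..<1} \<Longrightarrow> (\<integral>v. indicator (R q) v * (h v * m v) \<partial>lborel) = Gi q"
    and Gic: "continuous_on ({0<..<1} \<times> {0<..<1}) Gi"
    and Gim: "\<And>q. q \<in> {0<..<1} \<times> {0<..<1} \<Longrightarrow> has_mixed_partial Gi q (- (h q * m q))"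
  shows "\<forall>p \<in> interior (supp_on M Q (\<lambda>_. True)). has_mixed_partial psi p (- (h p * m p))"
proof
  define G where "G = (\<lambda>q. \<integral>\<omega>. Y \<omega> * indicator (R q) (V \<omega>) \<partial>M)"
  note A = identA[OF P Qm Vm Ym fm intY indep Rmeas fAE G_def]
  have psiI: "integrable M (\<lambda>\<omega>. psi (Q \<omega>))"
    and eqpsi: "\<And>A. A \<in> sets borel \<Longrightarrow> (\<integral>\<omega>. f \<omega> * indicator A (Q \<omega>) \<partial>M) = (\<integral>\<omega>. psi (Q \<omega>) * indicator A (Q \<omega>) \<partial>M)"
    using psi unfolding cond_exp_version_def by simp_all
  have mm: "m \<in> borel_measurable borel"
    and eqm: "\<And>A. A \<in> sets borel \<Longrightarrow> (\<integral>\<omega>. Y \<omega> * indicator A (V \<omega>) \<partial>M) = (\<integral>\<omega>. m (V \<omega>) * indicator A (V \<omega>) \<partial>M)"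
    using m unfolding cond_exp_version_def by simp_all
  have Rq: "R q \<in> sets borel" for q
  proof -
    have "(\<lambda>v::real\<times>real. (q, v)) \<in> borel_measurable borel"
      by (intro borel_measurable_continuous_onI continuous_intros)
    from measurable_compose[OF this Rmeas] have "indicator (R q) \<in> (borel_measurable borel :: (real\<times>real \<Rightarrow> real) set)"
      by simp
    then show ?thesis unfolding borel_measurable_indicator_iff by simp
  qed
  have GGi: "G q = Gi q" if q: "q \<in> {0<..<1} \<times> {0<..<1}" for q
  proof -
    have "G q = (\<integral>\<omega>. m (V \<omega>) * indicator (R q) (V \<omega>) \<partial>M)" unfolding G_def by (rule eqm[OF Rq])
    also have "\<dots> = (\<integral>v. h v * (m v * indicator (R q) v) \<partial>lborel)"
    proof (rule distributed_integral[OF hdens, symmetric])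
      show "(\<lambda>v. m v * indicator (R q) v) \<in> borel_measurable lborel"
        using mm Rq by simp
    qed (simp add: hnn)
    also have "\<dots> = (\<integral>v. indicator (R q) v * (h v * m v) \<partial>lborel)"
      by (simp add: mult_ac)
    also have "\<dots> = Gi q" by (rule Gform[OF q])
    finally show ?thesis .
  qed
  have Gcont: "continuous_on ({0<..<1} \<times> {0<..<1}) G"
  proof -
    have "continuous_on ({0<..<1} \<times> {0<..<1}) G = continuous_on ({0<..<1} \<times> {0<..<1}) Gi"
      by (rule continuous_on_cong) (auto simp only: GGi)
    then show ?thesis using Gic by simp
  qed
  let ?S = "supp_on M Q (\<lambda>_. True)"
  have box: "interior ?S \<subseteq> {0<..<1} \<times> {0<..<1}" by (rule supp_box[OF Qr])
  have pG: "psi q = G q" if q: "q \<in> interior ?S" for q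
  proof (rule identB[where M=M and Q=Q and psi=psi and G=G and p=q])
    show "prob_space M" by (rule P)
    show "Q \<in> borel_measurable M" by (rule Qm)
    show "integrable M (\<lambda>\<omega>. psi (Q \<omega>))" by (rule psiI)
    show "integrable M (\<lambda>\<omega>. G (Q \<omega>))" by (rule A(1))
    show "\<And>A. A \<in> sets borel \<Longrightarrow> (\<integral>\<omega>. psi (Q \<omega>) * indicator A (Q \<omega>) \<partial>M) = (\<integral>\<omega>. G (Q \<omega>) * indicator A (Q \<omega>) \<partial>M)"
      using trans[OF eqpsi[symmetric] A(2)] .
    show "q \<in> ?S" using q interior_subset by (rule subsetD[rotated])
    show "isCont psi q" by (rule continuous_on_interior[OF psic q])
    have "q \<in> {0<..<1} \<times> {0<..<1}" using q box by (rule subsetD[rotated])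
    then have "q \<in> interior ({0<..<1} \<times> {0<..<1})" by (simp add: interior_open open_Times)
    then show "isCont G q" by (rule continuous_on_interior[OF Gcont])
  qed
  fix p assume p: "p \<in> interior ?S"
  obtain e where e: "e > 0" "ball p e \<subseteq> interior ?S"
    using p open_interior open_contains_ball by blast
  show "has_mixed_partial psi p (- (h p * m p))"
  proof (rule mixed_local[OF Gim e(1)])
    show "p \<in> {0<..<1} \<times> {0<..<1}" using p box by (rule subsetD[rotated])
    fix q assume "q \<in> ball p e"
    then have "q \<in> interior ?S" using e by blast
    then have "q \<in> {0<..<1} \<times> {0<..<1}" using box by (rule subsetD[rotated])
    then show "psi q = Gi q" using pG[OF \<open>q \<in> interior ?S\<close>] GGi by simp
  qed
qed



lemma unif_AE:
  assumes d: "distributed M lborel X (\<lambda>v. ennreal (indicator {0..1} v))"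
  shows "AE \<omega> in M. X \<omega> \<in> {0..1::real}"
proof -
  have Xm: "X \<in> measurable M lborel" using d by (rule distributed_measurable)
  have im: "(indicator {0..1} :: real \<Rightarrow> real) \<in> borel_measurable borel"
    by (rule borel_measurable_indicator) simp
  then have fm: "(\<lambda>v::real. ennreal (indicator {0..1} v :: real)) \<in> borel_measurable lborel"
  proof -
    have "(\<lambda>v::real. ennreal (indicator {0..1} v :: real)) \<in> borel_measurable borel"
      by (rule measurable_compose[OF im measurable_ennreal])
    then show ?thesis by simp
  qed
  have "AE x in density lborel (\<lambda>v. ennreal (indicator {0..1} v)). x \<in> {0..1::real}"
    by (subst AE_density[OF fm]) (auto simp: indicator_def)
  then have "AE x in distr M lborel X. x \<in> {0..1::real}"
    using distributed_distr_eq_density[OF d] by (simp only:)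
  from AE_distrD[OF Xm this] show ?thesis .
qed

lemma nash:
  fixes d1 d2 p10 p11 p20 p21 v1 v2 :: real
  assumes d1: "d1 = (if p10 + d2 * (p11 - p10) \<ge> v1 then 1 else 0)"
    and d2: "d2 = (if p20 + d1 * (p21 - p20) \<ge> v2 then 1 else 0)"
    and c1: "p11 - p10 > 0" and c2: "p21 - p20 > 0"
  shows "(d1 = 1 \<and> d2 = 0 \<longleftrightarrow> v1 \<le> p10 \<and> p21 < v2)"
    and "(d1 = 0 \<and> d2 = 1 \<longleftrightarrow> p11 < v1 \<and> v2 \<le> p20)"
proof -
  have A: "d2 = 0 \<or> d2 = 1" using d2 by (simp split: if_splits)
  have B: "d1 = 0 \<or> d1 = 1" using d1 by (simp split: if_splits)
  show "(d1 = 1 \<and> d2 = 0 \<longleftrightarrow> v1 \<le> p10 \<and> p21 < v2)"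
    using A B d1 d2 c1 c2 by (smt (verit) mult_cancel_right1 mult_eq_0_iff)
  show "(d1 = 0 \<and> d2 = 1 \<longleftrightarrow> p11 < v1 \<and> v2 \<le> p20)"
    using A B d1 d2 c1 c2 by (smt (verit) mult_cancel_right1 mult_eq_0_iff)
qed



definition R1 :: "real \<times> real \<Rightarrow> (real \<times> real) set" where
  "R1 q = {0..fst q} \<times> {snd q<..1}"
definition R2 :: "real \<times> real \<Rightarrow> (real \<times> real) set" where
  "R2 q = {fst q<..1} \<times> {0..snd q}"

lemma R1_meas: "(\<lambda>p. indicator (R1 (fst p)) (snd p) :: real) \<in> borel_measurable borel"
proof -
  let ?T = "{p::(real\<times>real)\<times>(real\<times>real). 0 \<le> fst (snd p)} \<inter> {p. fst (snd p) \<le> fst (fst p)}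
     \<inter> {p. snd (fst p) < snd (snd p)} \<inter> {p. snd (snd p) \<le> 1}"
  have "?T \<in> sets borel"
    by (intro sets.Int borel_closed borel_open closed_Collect_le open_Collect_less continuous_intros)
  then have "indicator ?T \<in> (borel_measurable borel :: (_ \<Rightarrow> real) set)" by (rule borel_measurable_indicator)
  moreover have "indicator ?T = (\<lambda>p. indicator (R1 (fst p)) (snd p) :: real)"
    by (auto simp: R1_def indicator_def fun_eq_iff mem_Times_iff)
  ultimately show ?thesis by simp
qed

lemma R2_meas: "(\<lambda>p. indicator (R2 (fst p)) (snd p) :: real) \<in> borel_measurable borel"
proof -
  let ?T = "{p::(real\<times>real)\<times>(real\<times>real). fst (fst p) < fst (snd p)} \<inter> {p. fst (snd p) \<le> 1}
     \<inter> {p. 0 \<le> snd (snd p)} \<inter> {p. snd (snd p) \<le> snd (fst p)}"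
  have "?T \<in> sets borel"
    by (intro sets.Int borel_closed borel_open closed_Collect_le open_Collect_less continuous_intros)
  then have "indicator ?T \<in> (borel_measurable borel :: (_ \<Rightarrow> real) set)" by (rule borel_measurable_indicator)
  moreover have "indicator ?T = (\<lambda>p. indicator (R2 (fst p)) (snd p) :: real)"
    by (auto simp: R2_def indicator_def fun_eq_iff mem_Times_iff)
  ultimately show ?thesis by simp
qed

lemma R1_int:
  assumes kc: "continuous_on ({0..1} \<times> {0..1}) k" and q: "q \<in> {0<..<1} \<times> {0<..<1}"
  shows "(\<integral>v. indicator (R1 q) v * k v \<partial>lborel) = Hi k (fst q) 1 - Hi k (fst q) (snd q)"
proof -
  obtain a b where qab: "q = (a, b)" by (cases q)
  have ab: "a \<in> {0..1}" "b \<in> {0..1}" using q qab by auto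
  have i1: "integrable lborel (\<lambda>v. indicator ({0..a} \<times> {0..1}) v * k v)"
    using ab by (intro k_integrable[OF kc] borel_closed closed_Times) auto
  have i2: "integrable lborel (\<lambda>v. indicator ({0..a} \<times> {0..b}) v * k v)"
    using ab by (intro k_integrable[OF kc] borel_closed closed_Times) auto
  have "(\<lambda>v. indicator (R1 q) v * k v) = (\<lambda>v. indicator ({0..a} \<times> {0..1}) v * k v - indicator ({0..a} \<times> {0..b}) v * k v)"
    using ab by (auto simp: R1_def qab indicator_def fun_eq_iff mem_Times_iff)
  then have "(\<integral>v. indicator (R1 q) v * k v \<partial>lborel)
      = (\<integral>v. indicator ({0..a} \<times> {0..1}) v * k v \<partial>lborel) - (\<integral>v. indicator ({0..a} \<times> {0..b}) v * k v \<partial>lborel)"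
    using i1 i2 by simp
  also have "\<dots> = Hi k a 1 - Hi k a b" using ab by (simp add: H_eq[OF kc])
  finally show ?thesis by (simp add: qab)
qed

lemma R2_int:
  assumes kc: "continuous_on ({0..1} \<times> {0..1}) k" and q: "q \<in> {0<..<1} \<times> {0<..<1}"
  shows "(\<integral>v. indicator (R2 q) v * k v \<partial>lborel) = Hi k 1 (snd q) - Hi k (fst q) (snd q)"
proof -
  obtain a b where qab: "q = (a, b)" by (cases q)
  have ab: "a \<in> {0..1}" "b \<in> {0..1}" using q qab by auto
  have i1: "integrable lborel (\<lambda>v. indicator ({0..1} \<times> {0..b}) v * k v)"
    using ab by (intro k_integrable[OF kc] borel_closed closed_Times) auto
  have i2: "integrable lborel (\<lambda>v. indicator ({0..a} \<times> {0..b}) v * k v)"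
    using ab by (intro k_integrable[OF kc] borel_closed closed_Times) auto
  have "(\<lambda>v. indicator (R2 q) v * k v) = (\<lambda>v. indicator ({0..1} \<times> {0..b}) v * k v - indicator ({0..a} \<times> {0..b}) v * k v)"
    using ab by (auto simp: R2_def qab indicator_def fun_eq_iff mem_Times_iff)
  then have "(\<integral>v. indicator (R2 q) v * k v \<partial>lborel)
      = (\<integral>v. indicator ({0..1} \<times> {0..b}) v * k v \<partial>lborel) - (\<integral>v. indicator ({0..a} \<times> {0..b}) v * k v \<partial>lborel)"
    using i1 i2 by simp
  also have "\<dots> = Hi k 1 b - Hi k a b" using ab by (simp add: H_eq[OF kc])
  finally show ?thesis by (simp add: qab)
qed

lemma G1_cont:
  assumes kc: "continuous_on ({0..1} \<times> {0..1}) k"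
  shows "continuous_on ({0<..<1} \<times> {0<..<1}) (\<lambda>q. Hi k (fst q) 1 - Hi k (fst q) (snd q))"
proof -
  note H = Hi_cont[OF kc]
  have c1: "continuous_on ({0<..<1} \<times> {0<..<1}) (\<lambda>q. Hi k (fst (fst q, 1::real)) (snd (fst q, 1::real)))"
    by (rule continuous_on_compose2[OF H]) (auto intro!: continuous_intros)
  have c2: "continuous_on ({0<..<1} \<times> {0<..<1}) (\<lambda>q. Hi k (fst q) (snd q))"
    by (rule continuous_on_subset[OF H]) auto
  show ?thesis using continuous_on_diff[OF c1 c2] by simp
qed

lemma G2_cont:
  assumes kc: "continuous_on ({0..1} \<times> {0..1}) k"
  shows "continuous_on ({0<..<1} \<times> {0<..<1}) (\<lambda>q. Hi k 1 (snd q) - Hi k (fst q) (snd q))"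
proof -
  note H = Hi_cont[OF kc]
  have c1: "continuous_on ({0<..<1} \<times> {0<..<1}) (\<lambda>q. Hi k (fst (1::real, snd q)) (snd (1::real, snd q)))"
    by (rule continuous_on_compose2[OF H]) (auto intro!: continuous_intros)
  have c2: "continuous_on ({0<..<1} \<times> {0<..<1}) (\<lambda>q. Hi k (fst q) (snd q))"
    by (rule continuous_on_subset[OF H]) auto
  show ?thesis using continuous_on_diff[OF c1 c2] by simp
qed



theorem theorem1:
  fixes M :: "'a measure"
    and V1 V2 P10 P11 P20 P21 D1 D2 Y1 :: "'a \<Rightarrow> real"
    and Y :: "nat \<Rightarrow> nat \<Rightarrow> 'a \<Rightarrow> real"
    and h m10 m01 psi10 psi01 :: "real \<times> real \<Rightarrow> real"
  assumes prob: "prob_space M"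
    \<comment> \<open>random variables\<close>
    and rv: "V1 \<in> borel_measurable M" "V2 \<in> borel_measurable M"
            "P10 \<in> borel_measurable M" "P11 \<in> borel_measurable M"
            "P20 \<in> borel_measurable M" "P21 \<in> borel_measurable M"
            "D1 \<in> borel_measurable M" "D2 \<in> borel_measurable M"
    and rvY: "\<And>d1 d2. d1 \<in> {0,1} \<Longrightarrow> d2 \<in> {0,1} \<Longrightarrow> (Y d1 d2) \<in> borel_measurable M"
    and intY: "\<And>d1 d2. d1 \<in> {0,1} \<Longrightarrow> d2 \<in> {0,1} \<Longrightarrow> integrable M (Y d1 d2)"
    \<comment> \<open>propensities are conditional CDF values, hence in [0,1]\<close>
    and Prange: "\<And>\<omega>. \<omega> \<in> space M \<Longrightarrow> P10 \<omega> \<in> {0..1} \<and> P11 \<omega> \<in> {0..1} \<and> P20 \<omega> \<in> {0..1} \<and> P21 \<omega> \<in> {0..1}"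
    \<comment> \<open>V_j uniform on [0,1]; (V1,V2) has density h (given X = x)\<close>
    and V1unif: "distributed M lborel V1 (\<lambda>v. ennreal (indicator {0..1} v))"
    and V2unif: "distributed M lborel V2 (\<lambda>v. ennreal (indicator {0..1} v))"
    and hnn: "\<And>v. 0 \<le> h v"
    and hdens: "distributed M lborel (\<lambda>\<omega>. (V1 \<omega>, V2 \<omega>)) (\<lambda>v. ennreal (h v))"
    \<comment> \<open>treatments form a pure-strategy Nash equilibrium\<close>
    and D1eq: "\<And>\<omega>. \<omega> \<in> space M \<Longrightarrow>
       D1 \<omega> = (if P10 \<omega> + D2 \<omega> * (P11 \<omega> - P10 \<omega>) \<ge> V1 \<omega> then 1 else 0)"
    and D2eq: "\<And>\<omega>. \<omega> \<in> space M \<Longrightarrow>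
       D2 \<omega> = (if P20 \<omega> + D1 \<omega> * (P21 \<omega> - P20 \<omega>) \<ge> V2 \<omega> then 1 else 0)"
    \<comment> \<open>observed outcome of player 1\<close>
    and Y1eq: "\<And>\<omega>. \<omega> \<in> space M \<Longrightarrow>
       Y1 \<omega> = (\<Sum>d1\<in>{0::nat,1}. \<Sum>d2\<in>{0::nat,1}.
                 (if D1 \<omega> = real d1 \<and> D2 \<omega> = real d2 then 1 else 0) * Y d1 d2 \<omega>)"
    \<comment> \<open>(a) strategic complementarity\<close>
    and compl: "AE \<omega> in M. P11 \<omega> - P10 \<omega> > 0 \<and> P21 \<omega> - P20 \<omega> > 0"
    \<comment> \<open>(c) instruments (hence propensities) independent of (epsilon, U) given X = x\<close>
    and indep: "\<And>A B. A \<in> sets borel \<Longrightarrow> B \<in> sets borel \<Longrightarrow>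
       measure M {\<omega> \<in> space M. (P10 \<omega>, P11 \<omega>, P20 \<omega>, P21 \<omega>) \<in> A
                  \<and> (V1 \<omega>, V2 \<omega>, Y 0 0 \<omega>, Y 0 1 \<omega>, Y 1 0 \<omega>, Y 1 1 \<omega>) \<in> B}
       = measure M {\<omega> \<in> space M. (P10 \<omega>, P11 \<omega>, P20 \<omega>, P21 \<omega>) \<in> A}
         * measure M {\<omega> \<in> space M. (V1 \<omega>, V2 \<omega>, Y 0 0 \<omega>, Y 0 1 \<omega>, Y 1 0 \<omega>, Y 1 1 \<omega>) \<in> B}"
    \<comment> \<open>(d) propensities non-degenerate and continuously distributed given X = x\<close>
    and contP: "\<And>c. measure M {\<omega> \<in> space M. P10 \<omega> = c} = 0"
               "\<And>c. measure M {\<omega> \<in> space M. P11 \<omega> = c} = 0"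
               "\<And>c. measure M {\<omega> \<in> space M. P20 \<omega> = c} = 0"
               "\<And>c. measure M {\<omega> \<in> space M. P21 \<omega> = c} = 0"
    \<comment> \<open>MTR functions m^(1,0), m^(0,1) at X = x: versions of E[Y^(d) | V = v]\<close>
    and m10: "cond_exp_version M (\<lambda>\<omega>. (V1 \<omega>, V2 \<omega>)) (Y 1 0) m10"
    and m01: "cond_exp_version M (\<lambda>\<omega>. (V1 \<omega>, V2 \<omega>)) (Y 0 1) m01"
    \<comment> \<open>psi^(1,0), psi^(0,1) at X = x (continuous versions on the support)\<close>
    and psi10: "cond_exp_version M (\<lambda>\<omega>. (P10 \<omega>, P21 \<omega>))
                  (\<lambda>\<omega>. (if D1 \<omega> = 1 \<and> D2 \<omega> = 0 then 1 else 0) * Y1 \<omega>) psi10"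
    and psi01: "cond_exp_version M (\<lambda>\<omega>. (P11 \<omega>, P20 \<omega>))
                  (\<lambda>\<omega>. (if D1 \<omega> = 0 \<and> D2 \<omega> = 1 then 1 else 0) * Y1 \<omega>) psi01"
    and psi10_cont: "continuous_on (supp_on M (\<lambda>\<omega>. (P10 \<omega>, P21 \<omega>)) (\<lambda>_. True)) psi10"
    and psi01_cont: "continuous_on (supp_on M (\<lambda>\<omega>. (P11 \<omega>, P20 \<omega>)) (\<lambda>_. True)) psi01"
    \<comment> \<open>continuity of m^(1,0), m^(0,1), h in (v1,v2)\<close>
    and cont: "continuous_on ({0..1} \<times> {0..1}) m10" "continuous_on ({0..1} \<times> {0..1}) m01"
              "continuous_on ({0..1} \<times> {0..1}) h"
  shows
    "(\<forall>p \<in> supp_on M (\<lambda>\<omega>. (P10 \<omega>, P21 \<omega>)) (\<lambda>\<omega>. D1 \<omega> = 1 \<and> D2 \<omega> = 0)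
            \<inter> interior (supp_on M (\<lambda>\<omega>. (P10 \<omega>, P21 \<omega>)) (\<lambda>_. True)).
        \<exists>c. has_mixed_partial psi10 p c \<and> m10 p * h p = - c \<and>
            (h p \<noteq> 0 \<longrightarrow> m10 p = - (1 / h p) * c))
   \<and> (\<forall>p \<in> supp_on M (\<lambda>\<omega>. (P11 \<omega>, P20 \<omega>)) (\<lambda>\<omega>. D1 \<omega> = 0 \<and> D2 \<omega> = 1)
            \<inter> interior (supp_on M (\<lambda>\<omega>. (P11 \<omega>, P20 \<omega>)) (\<lambda>_. True)).
        \<exists>c. has_mixed_partial psi01 p c \<and> m01 p * h p = - c \<and>
            (h p \<noteq> 0 \<longrightarrow> m01 p = - (1 / h p) * c))"
proof -
  interpret prob_space M by (rule prob)
  note rvm[measurable] = rv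
  have Ym[measurable]: "Y 0 0 \<in> borel_measurable M" "Y 0 1 \<in> borel_measurable M"
    "Y 1 0 \<in> borel_measurable M" "Y 1 1 \<in> borel_measurable M" using rvY by auto
  have Yi: "integrable M (Y 1 0)" "integrable M (Y 0 1)" using intY by auto
  have Y1eq': "Y1 \<omega> = (if D1 \<omega> = 0 \<and> D2 \<omega> = 0 then 1 else 0) * Y 0 0 \<omega> + (if D1 \<omega> = 0 \<and> D2 \<omega> = 1 then 1 else 0) * Y 0 1 \<omega>
     + ((if D1 \<omega> = 1 \<and> D2 \<omega> = 0 then 1 else 0) * Y 1 0 \<omega> + (if D1 \<omega> = 1 \<and> D2 \<omega> = 1 then 1 else 0) * Y 1 1 \<omega>)"
    if "\<omega> \<in> space M" for \<omega> using Y1eq[OF that] by (simp add: sum.insert)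
  have "(\<lambda>\<omega>. (if D1 \<omega> = 0 \<and> D2 \<omega> = 0 then 1 else 0) * Y 0 0 \<omega> + (if D1 \<omega> = 0 \<and> D2 \<omega> = 1 then 1 else 0) * Y 0 1 \<omega>
     + ((if D1 \<omega> = 1 \<and> D2 \<omega> = 0 then 1 else 0) * Y 1 0 \<omega> + (if D1 \<omega> = 1 \<and> D2 \<omega> = 1 then 1 else (0::real)) * Y 1 1 \<omega>))
     \<in> borel_measurable M" by measurable
  then have Y1m[measurable]: "Y1 \<in> borel_measurable M"
    by (rule measurable_cong[THEN iffD1, rotated]) (simp add: Y1eq')
  have AEv1: "AE \<omega> in M. V1 \<omega> \<in> {0..1}" by (rule unif_AE[OF V1unif])
  have AEv2: "AE \<omega> in M. V2 \<omega> \<in> {0..1}" by (rule unif_AE[OF V2unif])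
  define S1 where "S1 = supp_on M (\<lambda>\<omega>. (P10 \<omega>, P21 \<omega>)) (\<lambda>_. True)"
  define S2 where "S2 = supp_on M (\<lambda>\<omega>. (P11 \<omega>, P20 \<omega>)) (\<lambda>_. True)"
  have k1c: "continuous_on ({0..1} \<times> {0..1}) (\<lambda>v. h v * m10 v)"
    using cont by (intro continuous_on_mult) auto
  have k2c: "continuous_on ({0..1} \<times> {0..1}) (\<lambda>v. h v * m01 v)"
    using cont by (intro continuous_on_mult) auto
  have part1: "\<forall>p \<in> interior S1. has_mixed_partial psi10 p (- (h p * m10 p))"
    unfolding S1_def
  proof (rule part_generic[where Y = "Y 1 0" and R = R1 and Gi = "\<lambda>q. Hi (\<lambda>v. h v * m10 v) (fst q) 1 - Hi (\<lambda>v. h v * m10 v) (fst q) (snd q)"])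
    show "prob_space M" by (rule prob)
    show "(\<lambda>\<omega>. (P10 \<omega>, P21 \<omega>)) \<in> borel_measurable M" by measurable
    show "(\<lambda>\<omega>. (V1 \<omega>, V2 \<omega>)) \<in> borel_measurable M" by measurable
    show "Y 1 0 \<in> borel_measurable M" by measurable
    show "(\<lambda>\<omega>. (if D1 \<omega> = 1 \<and> D2 \<omega> = 0 then 1 else 0) * Y1 \<omega>) \<in> borel_measurable M" by measurable
    show "integrable M (Y 1 0)" by (rule Yi)
    show "\<And>\<omega>. \<omega> \<in> space M \<Longrightarrow> (P10 \<omega>, P21 \<omega>) \<in> {0..1} \<times> {0..1}" using Prange by auto
    show "measure M {\<omega> \<in> space M. (P10 \<omega>, P21 \<omega>) \<in> A \<and> ((V1 \<omega>, V2 \<omega>), Y 1 0 \<omega>) \<in> B} =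
       measure M {\<omega> \<in> space M. (P10 \<omega>, P21 \<omega>) \<in> A} * measure M {\<omega> \<in> space M. ((V1 \<omega>, V2 \<omega>), Y 1 0 \<omega>) \<in> B}"
      if A: "A \<in> sets borel" and B: "B \<in> sets borel" for A B
    proof -
      define g1 where "g1 = (\<lambda>x::real\<times>real\<times>real\<times>real. (fst x, snd (snd (snd x))))"
      define g2 where "g2 = (\<lambda>x::real\<times>real\<times>real\<times>real\<times>real\<times>real. ((fst x, fst (snd x)), fst (snd (snd (snd (snd x))))))"
      have f1: "g1 \<in> borel_measurable borel" unfolding g1_def
        by (intro borel_measurable_continuous_onI continuous_intros)
      have f2: "g2 \<in> borel_measurable borel" unfolding g2_def
        by (intro borel_measurable_continuous_onI continuous_intros)
      have A': "g1 -` A \<in> sets borel"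
        using measurable_sets[OF f1 A] by simp
      have B': "g2 -` B \<in> sets borel"
        using measurable_sets[OF f2 B] by simp
      have e1: "{\<omega> \<in> space M. (P10 \<omega>, P11 \<omega>, P20 \<omega>, P21 \<omega>) \<in> g1 -` A \<and> (V1 \<omega>, V2 \<omega>, Y 0 0 \<omega>, Y 0 1 \<omega>, Y 1 0 \<omega>, Y 1 1 \<omega>) \<in> g2 -` B}
         = {\<omega> \<in> space M. (P10 \<omega>, P21 \<omega>) \<in> A \<and> ((V1 \<omega>, V2 \<omega>), Y 1 0 \<omega>) \<in> B}"
        by (auto simp: g1_def g2_def)
      have e2: "{\<omega> \<in> space M. (P10 \<omega>, P11 \<omega>, P20 \<omega>, P21 \<omega>) \<in> g1 -` A} = {\<omega> \<in> space M. (P10 \<omega>, P21 \<omega>) \<in> A}"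
        by (auto simp: g1_def)
      have e3: "{\<omega> \<in> space M. (V1 \<omega>, V2 \<omega>, Y 0 0 \<omega>, Y 0 1 \<omega>, Y 1 0 \<omega>, Y 1 1 \<omega>) \<in> g2 -` B}
         = {\<omega> \<in> space M. ((V1 \<omega>, V2 \<omega>), Y 1 0 \<omega>) \<in> B}"
        by (auto simp: g2_def)
      show ?thesis using indep[OF A' B'] unfolding e1 e2 e3 .
    qed
    show "(\<lambda>p. indicator (R1 (fst p)) (snd p) :: real) \<in> borel_measurable borel" by (rule R1_meas)
    show "AE \<omega> in M. (if D1 \<omega> = 1 \<and> D2 \<omega> = 0 then 1 else 0) * Y1 \<omega> = indicator (R1 (P10 \<omega>, P21 \<omega>)) (V1 \<omega>, V2 \<omega>) * Y 1 0 \<omega>"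
      using compl AEv1 AEv2 AE_space
    proof eventually_elim
      case (elim \<omega>)
      note n = nash(1)[OF D1eq[OF elim(4)] D2eq[OF elim(4)]]
      have iff: "D1 \<omega> = 1 \<and> D2 \<omega> = 0 \<longleftrightarrow> V1 \<omega> \<le> P10 \<omega> \<and> P21 \<omega> < V2 \<omega>"
        using n elim(1) by blast
      show ?case
      proof (cases "D1 \<omega> = 1 \<and> D2 \<omega> = 0")
        case True
        then have "Y1 \<omega> = Y 1 0 \<omega>" using Y1eq'[OF elim(4)] by simp
        moreover have "(V1 \<omega>, V2 \<omega>) \<in> R1 (P10 \<omega>, P21 \<omega>)"
          using True iff elim(2,3) by (auto simp: R1_def)
        ultimately show ?thesis using True by simp
      next
        case False
        then have "(V1 \<omega>, V2 \<omega>) \<notin> R1 (P10 \<omega>, P21 \<omega>)"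
          using iff by (auto simp: R1_def)
        then show ?thesis using False by auto
      qed
    qed
    show "cond_exp_version M (\<lambda>\<omega>. (P10 \<omega>, P21 \<omega>)) (\<lambda>\<omega>. (if D1 \<omega> = 1 \<and> D2 \<omega> = 0 then 1 else 0) * Y1 \<omega>) psi10"
      by (rule psi10)
    show "continuous_on (supp_on M (\<lambda>\<omega>. (P10 \<omega>, P21 \<omega>)) (\<lambda>_. True)) psi10" by (rule psi10_cont)
    show "cond_exp_version M (\<lambda>\<omega>. (V1 \<omega>, V2 \<omega>)) (Y 1 0) m10" by (rule m10)
    show "distributed M lborel (\<lambda>\<omega>. (V1 \<omega>, V2 \<omega>)) (\<lambda>v. ennreal (h v))" by (rule hdens)
    show "\<And>v. 0 \<le> h v" by (rule hnn)
    show "(\<integral>v. indicator (R1 q) v * (h v * m10 v) \<partial>lborel) =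
          Hi (\<lambda>v. h v * m10 v) (fst q) 1 - Hi (\<lambda>v. h v * m10 v) (fst q) (snd q)"
      if "q \<in> {0<..<1} \<times> {0<..<1}" for q
      by (rule R1_int[OF k1c that])
    show "continuous_on ({0<..<1} \<times> {0<..<1}) (\<lambda>q. Hi (\<lambda>v. h v * m10 v) (fst q) 1 - Hi (\<lambda>v. h v * m10 v) (fst q) (snd q))"
      by (rule G1_cont[OF k1c])
    show "has_mixed_partial (\<lambda>q. Hi (\<lambda>v. h v * m10 v) (fst q) 1 - Hi (\<lambda>v. h v * m10 v) (fst q) (snd q)) q (- (h q * m10 q))"
      if "q \<in> {0<..<1} \<times> {0<..<1}" for q
      using mixed_G1[OF k1c that] by simp
  qed
  have part2: "\<forall>p \<in> interior S2. has_mixed_partial psi01 p (- (h p * m01 p))"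
    unfolding S2_def
  proof (rule part_generic[where Y = "Y 0 1" and R = R2 and Gi = "\<lambda>q. Hi (\<lambda>v. h v * m01 v) 1 (snd q) - Hi (\<lambda>v. h v * m01 v) (fst q) (snd q)"])
    show "prob_space M" by (rule prob)
    show "(\<lambda>\<omega>. (P11 \<omega>, P20 \<omega>)) \<in> borel_measurable M" by measurable
    show "(\<lambda>\<omega>. (V1 \<omega>, V2 \<omega>)) \<in> borel_measurable M" by measurable
    show "Y 0 1 \<in> borel_measurable M" by measurable
    show "(\<lambda>\<omega>. (if D1 \<omega> = 0 \<and> D2 \<omega> = 1 then 1 else 0) * Y1 \<omega>) \<in> borel_measurable M" by measurable
    show "integrable M (Y 0 1)" by (rule Yi(2))
    show "\<And>\<omega>. \<omega> \<in> space M \<Longrightarrow> (P11 \<omega>, P20 \<omega>) \<in> {0..1} \<times> {0..1}" using Prange by auto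
    show "measure M {\<omega> \<in> space M. (P11 \<omega>, P20 \<omega>) \<in> A \<and> ((V1 \<omega>, V2 \<omega>), Y 0 1 \<omega>) \<in> B} =
       measure M {\<omega> \<in> space M. (P11 \<omega>, P20 \<omega>) \<in> A} * measure M {\<omega> \<in> space M. ((V1 \<omega>, V2 \<omega>), Y 0 1 \<omega>) \<in> B}"
      if A: "A \<in> sets borel" and B: "B \<in> sets borel" for A B
    proof -
      define g1 where "g1 = (\<lambda>x::real\<times>real\<times>real\<times>real. (fst (snd x), fst (snd (snd x))))"
      define g2 where "g2 = (\<lambda>x::real\<times>real\<times>real\<times>real\<times>real\<times>real. ((fst x, fst (snd x)), fst (snd (snd (snd x)))))"
      have f1: "g1 \<in> borel_measurable borel" unfolding g1_def
        by (intro borel_measurable_continuous_onI continuous_intros)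
      have f2: "g2 \<in> borel_measurable borel" unfolding g2_def
        by (intro borel_measurable_continuous_onI continuous_intros)
      have A': "g1 -` A \<in> sets borel"
        using measurable_sets[OF f1 A] by simp
      have B': "g2 -` B \<in> sets borel"
        using measurable_sets[OF f2 B] by simp
      have e1: "{\<omega> \<in> space M. (P10 \<omega>, P11 \<omega>, P20 \<omega>, P21 \<omega>) \<in> g1 -` A \<and> (V1 \<omega>, V2 \<omega>, Y 0 0 \<omega>, Y 0 1 \<omega>, Y 1 0 \<omega>, Y 1 1 \<omega>) \<in> g2 -` B}
         = {\<omega> \<in> space M. (P11 \<omega>, P20 \<omega>) \<in> A \<and> ((V1 \<omega>, V2 \<omega>), Y 0 1 \<omega>) \<in> B}"
        by (auto simp: g1_def g2_def)
      have e2: "{\<omega> \<in> space M. (P10 \<omega>, P11 \<omega>, P20 \<omega>, P21 \<omega>) \<in> g1 -` A} = {\<omega> \<in> space M. (P11 \<omega>, P20 \<omega>) \<in> A}"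
        by (auto simp: g1_def)
      have e3: "{\<omega> \<in> space M. (V1 \<omega>, V2 \<omega>, Y 0 0 \<omega>, Y 0 1 \<omega>, Y 1 0 \<omega>, Y 1 1 \<omega>) \<in> g2 -` B}
         = {\<omega> \<in> space M. ((V1 \<omega>, V2 \<omega>), Y 0 1 \<omega>) \<in> B}"
        by (auto simp: g2_def)
      show ?thesis using indep[OF A' B'] unfolding e1 e2 e3 .
    qed
    show "(\<lambda>p. indicator (R2 (fst p)) (snd p) :: real) \<in> borel_measurable borel" by (rule R2_meas)
    show "AE \<omega> in M. (if D1 \<omega> = 0 \<and> D2 \<omega> = 1 then 1 else 0) * Y1 \<omega> = indicator (R2 (P11 \<omega>, P20 \<omega>)) (V1 \<omega>, V2 \<omega>) * Y 0 1 \<omega>"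
      using compl AEv1 AEv2 AE_space
    proof eventually_elim
      case (elim \<omega>)
      note n = nash(2)[OF D1eq[OF elim(4)] D2eq[OF elim(4)]]
      have iff: "D1 \<omega> = 0 \<and> D2 \<omega> = 1 \<longleftrightarrow> P11 \<omega> < V1 \<omega> \<and> V2 \<omega> \<le> P20 \<omega>"
        using n elim(1) by blast
      show ?case
      proof (cases "D1 \<omega> = 0 \<and> D2 \<omega> = 1")
        case True
        then have "Y1 \<omega> = Y 0 1 \<omega>" using Y1eq'[OF elim(4)] by simp
        moreover have "(V1 \<omega>, V2 \<omega>) \<in> R2 (P11 \<omega>, P20 \<omega>)"
          using True iff elim(2,3) by (auto simp: R2_def)
        ultimately show ?thesis using True by simp
      next
        case False
        then have "(V1 \<omega>, V2 \<omega>) \<notin> R2 (P11 \<omega>, P20 \<omega>)"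
          using iff by (auto simp: R2_def)
        then show ?thesis using False by auto
      qed
    qed
    show "cond_exp_version M (\<lambda>\<omega>. (P11 \<omega>, P20 \<omega>)) (\<lambda>\<omega>. (if D1 \<omega> = 0 \<and> D2 \<omega> = 1 then 1 else 0) * Y1 \<omega>) psi01"
      by (rule psi01)
    show "continuous_on (supp_on M (\<lambda>\<omega>. (P11 \<omega>, P20 \<omega>)) (\<lambda>_. True)) psi01" by (rule psi01_cont)
    show "cond_exp_version M (\<lambda>\<omega>. (V1 \<omega>, V2 \<omega>)) (Y 0 1) m01" by (rule m01)
    show "distributed M lborel (\<lambda>\<omega>. (V1 \<omega>, V2 \<omega>)) (\<lambda>v. ennreal (h v))" by (rule hdens)
    show "\<And>v. 0 \<le> h v" by (rule hnn)
    show "(\<integral>v. indicator (R2 q) v * (h v * m01 v) \<partial>lborel) =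
          Hi (\<lambda>v. h v * m01 v) 1 (snd q) - Hi (\<lambda>v. h v * m01 v) (fst q) (snd q)"
      if "q \<in> {0<..<1} \<times> {0<..<1}" for q
      by (rule R2_int[OF k2c that])
    show "continuous_on ({0<..<1} \<times> {0<..<1}) (\<lambda>q. Hi (\<lambda>v. h v * m01 v) 1 (snd q) - Hi (\<lambda>v. h v * m01 v) (fst q) (snd q))"
      by (rule G2_cont[OF k2c])
    show "has_mixed_partial (\<lambda>q. Hi (\<lambda>v. h v * m01 v) 1 (snd q) - Hi (\<lambda>v. h v * m01 v) (fst q) (snd q)) q (- (h q * m01 q))"
      if "q \<in> {0<..<1} \<times> {0<..<1}" for q
      using mixed_G2[OF k2c that] by simp
  qed
  show ?thesis
  proof (intro conjI ballI)
    fix p assume "p \<in> supp_on M (\<lambda>\<omega>. (P10 \<omega>, P21 \<omega>)) (\<lambda>\<omega>. D1 \<omega> = 1 \<and> D2 \<omega> = 0) \<inter> interior (supp_on M (\<lambda>\<omega>. (P10 \<omega>, P21 \<omega>)) (\<lambda>_. True))"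
    then have "has_mixed_partial psi10 p (- (h p * m10 p))" using part1 unfolding S1_def by blast
    then show "\<exists>c. has_mixed_partial psi10 p c \<and> m10 p * h p = - c \<and> (h p \<noteq> 0 \<longrightarrow> m10 p = - (1 / h p) * c)"
      by (intro exI[of _ "- (h p * m10 p)"]) (auto simp: field_simps)
  next
    fix p assume "p \<in> supp_on M (\<lambda>\<omega>. (P11 \<omega>, P20 \<omega>)) (\<lambda>\<omega>. D1 \<omega> = 0 \<and> D2 \<omega> = 1) \<inter> interior (supp_on M (\<lambda>\<omega>. (P11 \<omega>, P20 \<omega>)) (\<lambda>_. True))"
    then have "has_mixed_partial psi01 p (- (h p * m01 p))" using part2 unfolding S2_def by blast
    then show "\<exists>c. has_mixed_partial psi01 p c \<and> m01 p * h p = - c \<and> (h p \<noteq> 0 \<longrightarrow> m01 p = - (1 / h p) * c)"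
      by (intro exI[of _ "- (h p * m01 p)"]) (auto simp: field_simps)
  qed
qed

end
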